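(* Let $n\ge5$ and let $f(x)=x^n+a_2x^{n-2}+a_3x^{n-3}+\dots+a_{n-1}x+a_n$ be a polynomial (with zero coefficient of $x^{n-1}$) all of whose roots are real. Then $$\operatorname{spn}(f)\ge\Big(\frac{432}{n^3}\big(4(2-n)a_2^3-9na_3^2+8na_2a_4\big)\Big)^{1/6}.$$
   Context: If $x_1,\dots,x_n$ are the roots of $f$, the span of $f$ is $\operatorname{spn}(f)=\max_{i,j}|x_i-x_j|$. *)

theory Defs
  imports "HOL-Analysis.Analysis" "HOL-Computational_Algebra.Polynomial"
begin

definition all_roots_real :: "real poly \<Rightarrow> bool" where
  "all_roots_real f \<longleftrightarrow>
     (\<forall>z::complex. poly (map_poly complex_of_real f) z = 0 \<longrightarrow> z \<in> \<real>)"

definition spn :: "real poly \<Rightarrow> real" where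
  "spn f = Max {\<bar>x - y\<bar> | x y. poly f x = 0 \<and> poly f y = 0}"

end

theory Submission
  imports Defs "HOL-Computational_Algebra.Fundamental_Theorem_Algebra"
begin


lemma arith_step:
  fixes e0 e1 e2 e3 e4 p1 p2 p3 p4 a :: real
  assumes "e0 = 1" "e1 = - p1" "2 * e2 = p1^2 - p2" "6 * e3 = - (p1^3 - 3*p1*p2 + 2*p3)"
    "24 * e4 = p1^4 - 6*p1^2*p2 + 3*p2^2 + 8*p1*p3 - 6*p4"
  shows "e1 - a * e0 = - (p1 + a^1)"
    "2 * (e2 - a * e1) = (p1 + a^1)^2 - (p2 + a^2)"
    "6 * (e3 - a * e2) = - ((p1 + a^1)^3 - 3*(p1 + a^1)*(p2+a^2) + 2*(p3 + a^3))"
    "24 * (e4 - a * e3) = (p1 + a^1)^4 - 6*(p1 + a^1)^2*(p2+a^2) + 3*(p2+a^2)^2 + 8*(p1 + a^1)*(p3+a^3) - 6*(p4+a^4)"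
proof -
  show "e1 - a * e0 = - (p1 + a^1)" using assms by simp
  have "2 * (e2 - a * e1) = (2*e2) - 2*a*e1" by (simp add: algebra_simps)
  also have "\<dots> = (p1 + a^1)^2 - (p2 + a^2)" unfolding assms(2,3) by (simp add: algebra_simps power2_eq_square)
  finally show "2 * (e2 - a * e1) = (p1 + a^1)^2 - (p2 + a^2)" .
  have "6 * (e3 - a * e2) = 6*e3 - 3*a*(2*e2)" by (simp add: algebra_simps)
  also have "\<dots> = - ((p1 + a^1)^3 - 3*(p1 + a^1)*(p2+a^2) + 2*(p3 + a^3))" unfolding assms(3,4) by (simp add: algebra_simps power2_eq_square power3_eq_cube)
  finally show "6 * (e3 - a * e2) = - ((p1 + a^1)^3 - 3*(p1 + a^1)*(p2+a^2) + 2*(p3 + a^3))" .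
  have "24 * (e4 - a * e3) = 24*e4 - 4*a*(6*e3)" by (simp add: algebra_simps)
  also have "\<dots> = (p1 + a^1)^4 - 6*(p1 + a^1)^2*(p2+a^2) + 3*(p2+a^2)^2 + 8*(p1 + a^1)*(p3+a^3) - 6*(p4+a^4)" unfolding assms(4,5) by (simp add: algebra_simps power2_eq_square power3_eq_cube power4_eq_xxxx)
  finally show "24 * (e4 - a * e3) = (p1 + a^1)^4 - 6*(p1 + a^1)^2*(p2+a^2) + 3*(p2+a^2)^2 + 8*(p1 + a^1)*(p3+a^3) - 6*(p4+a^4)" .
qed

definition ec :: "real poly \<Rightarrow> nat \<Rightarrow> nat \<Rightarrow> real" where
  "ec q m k = (if k \<le> m then coeff q (m - k) else 0)"

lemma coeff_lin_mult: "coeff ([:-a, 1:] * (q::real poly)) j = (if j = 0 then - a * coeff q 0 else coeff q (j - 1) - a * coeff q j)"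
  by (cases j) (simp_all add: mult_pCons_left coeff_pCons algebra_simps)
lemma ec_step: "k \<ge> 1 \<Longrightarrow> ec ([:-a, 1:] * q) (Suc m) k = ec q m k - a * ec q m (k - 1)"
  unfolding ec_def coeff_lin_mult
  by (auto simp: Suc_diff_le)

lemma vieta:
  fixes r :: "nat \<Rightarrow> real"
  defines "g \<equiv> \<lambda>m. \<Prod>i<m. [:-r i, 1:]"
  defines "p \<equiv> \<lambda>m k. \<Sum>i<m. r i ^ k"
  shows "ec (g m) m 0 = 1 \<and> degree (g m) = m \<and>
    ec (g m) m 1 = - p m 1 \<and>
    2 * ec (g m) m 2 = p m 1 ^ 2 - p m 2 \<and>
    6 * ec (g m) m 3 = - (p m 1 ^ 3 - 3 * p m 1 * p m 2 + 2 * p m 3) \<and>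
    24 * ec (g m) m 4 = p m 1 ^ 4 - 6 * p m 1 ^2 * p m 2 + 3 * p m 2 ^2 + 8 * p m 1 * p m 3 - 6 * p m 4"
proof (induction m)
  case 0
  show ?case by (simp add: g_def p_def ec_def)
next
  case (Suc m)
  let ?a = "r m"
  have gs: "g (Suc m) = [:-?a, 1:] * g m" unfolding g_def by (simp add: mult.commute)
  have ps: "p (Suc m) k = p m k + ?a ^ k" for k unfolding p_def by simp
  have e0: "ec (g (Suc m)) (Suc m) 0 = 1" using Suc.IH unfolding gs ec_def
    by (simp add: coeff_lin_mult coeff_eq_0)
  have gnz: "g m \<noteq> 0" using Suc.IH by (auto simp: ec_def)
  have dg: "degree (g (Suc m)) = Suc m" unfolding gs using Suc.IH gnz
    by (subst degree_mult_eq) auto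
  note st = ec_step[of _ ?a "g m" m, folded gs, simplified]
  have E1: "ec (g (Suc m)) (Suc m) 1 = ec (g m) m 1 - ?a * ec (g m) m 0" using st[of 1] by simp
  have E2: "ec (g (Suc m)) (Suc m) 2 = ec (g m) m 2 - ?a * ec (g m) m 1" using st[of 2] by simp
  have E3: "ec (g (Suc m)) (Suc m) 3 = ec (g m) m 3 - ?a * ec (g m) m 2" using st[of 3] by simp
  have E4: "ec (g (Suc m)) (Suc m) 4 = ec (g m) m 4 - ?a * ec (g m) m 3" using st[of 4] by simp
  show ?case using Suc.IH unfolding E1 E2 E3 E4 ps
    apply (elim conjE)
    apply (intro conjI e0 dg)
    by (rule arith_step; assumption)+
qed



lemma core:
  fixes x :: "nat \<Rightarrow> real"
  assumes n: "n > 0" and s0: "(\<Sum>i<n. x i) = 0" and b: "\<And>i. i < n \<Longrightarrow> u \<le> x i \<and> x i \<le> v"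
  defines "p2 \<equiv> \<Sum>i<n. x i^2" and "p3 \<equiv> \<Sum>i<n. x i^3" and "p4 \<equiv> \<Sum>i<n. x i^4"
  shows "432 * (real n * p2 * p4 - real n * p3^2 - p2^3) \<le> real n^3 * (v-u)^6"
proof -
  define M where "M = (u+v)/2"
  define h where "h = (v-u)/2"
  define y where "y i = (x i - M)^2" for i
  define Sy where "Sy = (\<Sum>i<n. y i)"
  define Syy where "Syy = (\<Sum>i<n. y i^2)"
  have y0: "0 \<le> y i" for i unfolding y_def by simp
  have yh: "y i \<le> h^2" if "i < n" for i
  proof -
    have "\<bar>x i - M\<bar> \<le> h" using b[OF that] unfolding M_def h_def by (auto simp: abs_le_iff field_simps)
    hence "\<bar>x i - M\<bar>^2 \<le> h^2" by (meson abs_ge_zero power_mono)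
    thus ?thesis unfolding y_def by simp
  qed
  have Syy_le: "Syy \<le> h^2 * Sy"
    unfolding Syy_def Sy_def sum_distrib_left
  proof (rule sum_mono)
    fix i assume "i \<in> {..<n}"
    then have "y i * y i \<le> h^2 * y i" using yh y0 by (simp add: mult_right_mono)
    thus "y i ^2 \<le> h^2 * y i" by (simp add: power2_eq_square)
  qed
  have Sy0: "0 \<le> Sy" unfolding Sy_def using y0 by (simp add: sum_nonneg)
  have Sy_eq: "Sy = p2 + real n * M^2"
  proof -
    have "Sy = (\<Sum>i<n. x i^2 + (-2*M) * x i + M^2)"
      unfolding Sy_def y_def by (rule sum.cong) (simp_all add: power2_eq_square algebra_simps)
    also have "\<dots> = p2 + (-2*M) * (\<Sum>i<n. x i) + real n * M^2"
      unfolding p2_def by (simp add: sum.distrib sum_distrib_left sum_subtractf sum_negf)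
    finally show ?thesis using s0 by simp
  qed
  have p20: "0 \<le> p2" unfolding p2_def by (simp add: sum_nonneg)
  have p2le: "p2 \<le> Sy" using Sy_eq by simp
  define mu where "mu = Sy / real n"
  define b where "b = -2*M"
  define c where "c = M^2 - mu"
  define Q where "Q = (\<Sum>i<n. (x i ^ 2 + b * x i + c)^2)"
  have Q_eq: "Q = p4 + 2*b*p3 + (b^2+2*c)*p2 + real n * c^2"
  proof -
    have "Q = (\<Sum>i<n. x i^4 + 2*b*x i^3 + (b^2+2*c)*x i^2 + 2*b*c*x i + c^2)"
      unfolding Q_def by (rule sum.cong) (simp_all add: power2_eq_square power3_eq_cube power4_eq_xxxx algebra_simps)
    also have "\<dots> = p4 + 2*b*p3 + (b^2+2*c)*p2 + 2*b*c*(\<Sum>i<n. x i) + real n * c^2"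
      unfolding p2_def p3_def p4_def by (simp add: sum.distrib sum_distrib_left sum_subtractf sum_negf)
    finally show ?thesis using s0 by simp
  qed
  have Q_eq2: "Q = Syy - Sy^2 / real n"
  proof -
    have "Q = (\<Sum>i<n. y i^2 + (-2*mu) * y i + mu^2)"
      unfolding Q_def y_def b_def c_def by (rule sum.cong) (simp_all add: power2_eq_square algebra_simps)
    also have "\<dots> = Syy + (-2*mu) * Sy + real n * mu^2"
      unfolding Syy_def Sy_def by (simp add: sum.distrib sum_distrib_left sum_subtractf sum_negf)
    finally show ?thesis using n unfolding mu_def by (simp add: field_simps power2_eq_square)
  qed
  have Q0: "0 \<le> Q" unfolding Q_def by (simp add: sum_nonneg)
  have ident: "real n * p2 * Q - (real n * p2 * p4 - real n * p3^2 - p2^3)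
      = real n * (p3 + b*p2)^2 + p2 * (real n * c + p2)^2"
    unfolding Q_eq by (simp add: power2_eq_square power3_eq_cube algebra_simps)
  have "0 \<le> real n * (p3 + b*p2)^2 + p2 * (real n * c + p2)^2" using p20 by simp
  hence D1: "real n * p2 * p4 - real n * p3^2 - p2^3 \<le> real n * p2 * Q" using ident by linarith
  have "real n * p2 * Q \<le> real n * Sy * Q" using p2le Q0 by (simp add: mult_right_mono mult_left_mono)
  also have "\<dots> \<le> real n * Sy * (h^2 * Sy - Sy^2 / real n)"
    using Q_eq2 Syy_le Sy0 by (intro mult_left_mono) auto
  also have "\<dots> = Sy^2 * (real n * h^2 - Sy)" using n by (simp add: field_simps power2_eq_square)
  also have "\<dots> \<le> 4 * real n^3 * h^6 / 27"
  proof -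
    have "4 * real n^3 * h^6 / 27 - Sy^2 * (real n * h^2 - Sy) = (Sy - 2*real n*h^2/3)^2 * (Sy + real n * h^2/3)"
      by (simp add: field_simps) (simp add: power2_eq_square power3_eq_cube algebra_simps eval_nat_numeral)
    also have "\<dots> \<ge> 0" using Sy0 by simp
    finally show ?thesis by simp
  qed
  finally have "real n * p2 * p4 - real n * p3^2 - p2^3 \<le> 4 * real n^3 * h^6 / 27" using D1 by linarith
  moreover have "(v-u)^6 = 64 * h^6" unfolding h_def by (simp add: field_simps)
  ultimately show ?thesis by simp
qed


lemma map_of_real_mult: "map_poly (of_real :: real \<Rightarrow> complex) (p * q) = map_poly of_real p * map_poly of_real q"
  by (simp add: poly_eq_iff coeff_map_poly coeff_mult of_real_sum)

lemma map_of_real_prod: "map_poly (of_real :: real \<Rightarrow> complex) (\<Prod>i<(m::nat). p i) = (\<Prod>i<m. map_poly of_real (p i))"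
  by (induction m) (simp_all add: map_of_real_mult)

lemma map_of_real_inj: "map_poly (of_real :: real \<Rightarrow> complex) p = map_poly of_real q \<Longrightarrow> p = q"
  by (simp add: poly_eq_iff coeff_map_poly)

lemma real_split:
  assumes "degree f = n" "lead_coeff f = 1" "all_roots_real f"
  obtains r :: "nat \<Rightarrow> real" where "f = (\<Prod>i<n. [:-r i, 1:])"
proof -
  define F where "F = map_poly (of_real :: real \<Rightarrow> complex) f"
  have dF: "degree F = n" unfolding F_def using assms by (simp add: degree_map_poly)
  have "lead_coeff F = coeff F n" using dF by simp
  also have "\<dots> = 1" unfolding F_def using assms by (simp add: coeff_map_poly)
  finally have lF: "lead_coeff F = 1" .
  obtain rt where rt: "smult (lead_coeff F) (\<Prod>i<degree F. [:-rt i, 1:]) = F"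
    using complex_poly_decompose' by blast
  hence Fp: "F = (\<Prod>i<n. [:-rt i, 1:])" using dF lF by simp
  have "rt i \<in> \<real>" if "i < n" for i
  proof -
    have "poly F (rt i) = 0" unfolding Fp poly_prod using that
      by (intro prod_zero) auto
    thus ?thesis using assms(3) unfolding all_roots_real_def F_def by blast
  qed
  hence rti: "rt i = of_real (Re (rt i))" if "i < n" for i using that
    by (simp add: complex_is_Real_iff)
  have "F = (\<Prod>i<n. map_poly of_real [:- Re (rt i), 1:])"
    unfolding Fp using rti by (intro prod.cong) (auto simp: map_poly_pCons)
  also have "\<dots> = map_poly of_real (\<Prod>i<n. [:- Re (rt i), 1:])" by (simp add: map_of_real_prod)
  finally have "f = (\<Prod>i<n. [:- Re (rt i), 1:])" unfolding F_def by (rule map_of_real_inj)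
  thus ?thesis by (rule that)
qed



theorem theorem4p2:
  fixes f :: "real poly" and n :: nat
  assumes "n \<ge> 5"
    and "degree f = n"
    and "lead_coeff f = 1"
    and "coeff f (n - 1) = 0"
    and "all_roots_real f"
  shows "spn f \<ge> root 6 ((432 / real n ^ 3) *
           (4 * (2 - real n) * coeff f (n - 2) ^ 3
            - 9 * real n * coeff f (n - 3) ^ 2
            + 8 * real n * coeff f (n - 2) * coeff f (n - 4)))"
proof -
  obtain r where fr: "f = (\<Prod>i<n. [:-r i, 1:])" using real_split assms(2,3,5) by blast
  define p where "p = (\<lambda>k. \<Sum>i<n. r i ^ k)"
  have V: "ec f n 1 = - p 1" "2 * ec f n 2 = p 1 ^ 2 - p 2"
    "6 * ec f n 3 = - (p 1 ^ 3 - 3 * p 1 * p 2 + 2 * p 3)"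
    "24 * ec f n 4 = p 1 ^ 4 - 6 * p 1 ^2 * p 2 + 3 * p 2 ^2 + 8 * p 1 * p 3 - 6 * p 4"
    using vieta[of r n] unfolding fr[symmetric] p_def by auto
  have ecc: "ec f n k = coeff f (n - k)" if "k \<le> 4" for k using that assms(1) by (simp add: ec_def)
  have p1: "p 1 = 0" using V(1) ecc[of 1] assms(4) by simp
  have a2: "coeff f (n-2) = - p 2 / 2" using V(2) ecc[of 2] p1 by simp
  have a3: "coeff f (n-3) = - p 3 / 3" using V(3) ecc[of 3] p1 by simp
  have a4: "coeff f (n-4) = (3 * p 2^2 - 6 * p 4) / 24" using V(4) ecc[of 4] p1 by simp
  have n0: "real n > 0" using assms(1) by simp
  have inner: "(432 / real n ^ 3) *
           (4 * (2 - real n) * coeff f (n - 2) ^ 3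
            - 9 * real n * coeff f (n - 3) ^ 2
            + 8 * real n * coeff f (n - 2) * coeff f (n - 4))
        = 432 * (real n * p 2 * p 4 - real n * p 3^2 - p 2^3) / real n ^ 3"
    unfolding a2 a3 a4 using n0 by (simp add: field_simps power2_eq_square power3_eq_cube)
  define R where "R = r ` {..<n}"
  have Rfin: "finite R" and Rne: "R \<noteq> {}" unfolding R_def using assms(1) by (auto simp: lessThan_empty_iff)
  define u where "u = Min R"
  define v where "v = Max R"
  have bnd: "u \<le> r i \<and> r i \<le> v" if "i < n" for i
    unfolding u_def v_def using that Rfin by (auto simp: R_def)
  have core': "432 * (real n * p 2 * p 4 - real n * p 3^2 - p 2^3) \<le> real n^3 * (v-u)^6"
    using core[of n r u v] bnd p1 assms(1) unfolding p_def by simp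
  have uv: "u \<le> v" using bnd[of 0] assms(1) by simp
  have innerle: "432 * (real n * p 2 * p 4 - real n * p 3^2 - p 2^3) / real n ^ 3 \<le> (v-u)^6"
    using core' n0 by (simp add: divide_le_eq mult.commute)
  have rootsf: "poly f (r i) = 0" if "i < n" for i
    unfolding fr poly_prod using that by (intro prod_zero) auto
  obtain iu where iu: "iu < n" "r iu = u" using Min_in[OF Rfin Rne] unfolding u_def R_def by auto
  obtain iv where iv: "iv < n" "r iv = v" using Max_in[OF Rfin Rne] unfolding v_def R_def by auto
  have fnz: "f \<noteq> 0" using assms(1,2) by auto
  have fin: "finite {\<bar>x - y\<bar> | x y. poly f x = 0 \<and> poly f y = 0}"
    using poly_roots_finite[OF fnz] by (intro finite_image_set2) auto
  have "v - u \<le> spn f" unfolding spn_def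
    using iu iv rootsf uv by (intro Max_ge[OF fin]) force
  moreover have "root 6 ((432 / real n ^ 3) *
           (4 * (2 - real n) * coeff f (n - 2) ^ 3
            - 9 * real n * coeff f (n - 3) ^ 2
            + 8 * real n * coeff f (n - 2) * coeff f (n - 4))) \<le> v - u"
  proof -
    have "root 6 ((432 / real n ^ 3) *
           (4 * (2 - real n) * coeff f (n - 2) ^ 3
            - 9 * real n * coeff f (n - 3) ^ 2
            + 8 * real n * coeff f (n - 2) * coeff f (n - 4))) \<le> root 6 ((v-u)^6)"
      unfolding inner using innerle by simp
    also have "\<dots> = v - u" using uv by (simp add: real_root_power_cancel)
    finally show ?thesis .
  qed
  ultimately show ?thesis by linarith
qed


end
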